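(* Let $(A_\gamma)_{\gamma\in\Gamma}$ be a nonempty family of nontrivial commutative groups, let $S_\gamma\subseteq A_\gamma$ generate $A_\gamma$, let $A=\bigoplus_\gamma A_\gamma$ (each $A_\gamma$ viewed as a subgroup of $A$), and let $B$ be a commutative group. For $f\in B^A$ and $d\in\mathbb N$, the following are equivalent: (i) there exist $r\in\mathbb N$, indices $\gamma_1,\dots,\gamma_r\in\Gamma$, positive integers $d_1,\dots,d_r$ with $d_1+\dots+d_r=d$, and elements $a_{i,j}\in S_{\gamma_i}$ ($1\le i\le r$, $1\le j\le d_i$) such that $\big(\prod_{i=1}^r\prod_{j=1}^{d_i}\Delta_{a_{i,j}}\big)f\ne0$; (ii) $\operatorname{fdeg}(f)\ge d$.
   Context: For commutative groups $A,B$, $B^A$ denotes the commutative group (under pointwise addition) of all maps $A\to B$. For $a\in A$, the difference operator $\Delta_a:B^A\to B^A$ is $(\Delta_a f)(x)=f(x+a)-f(x)$; the empty product of such operators is the identity. Let $\widetilde{\mathbb N}=\mathbb N\cup\{-\infty,\infty\}$ ($\mathbb N=\{0,1,2,\dots\}$), totally ordered with $-\infty$ least and $\infty$ greatest. The functional degree $\operatorname{fdeg}(f)\in\widetilde{\mathbb N}$ of $f\in B^A$ is: $-\infty$ if $f=0$; otherwise the least $n\in\mathbb N$ such that $\Delta_{a_1}\cdots\Delta_{a_{n+1}}f=0$ for all $a_1,\dots,a_{n+1}\in A$; and $\infty$ if no such $n$ exists. *)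

theory Defs
  imports "HOL-Algebra.Algebra" "HOL-Library.Extended_Real"
begin

text \<open>Maps A -> B are HOL functions; only their values on carrier A matter.
  Groups (written multiplicatively in HOL-Algebra) play the role of the
  commutative groups of the paper.\<close>

definition delta :: "('a,'c) monoid_scheme \<Rightarrow> ('b,'d) monoid_scheme \<Rightarrow> 'a \<Rightarrow> ('a \<Rightarrow> 'b) \<Rightarrow> ('a \<Rightarrow> 'b)"
  where "delta A B a f = (\<lambda>x. f (x \<otimes>\<^bsub>A\<^esub> a) \<otimes>\<^bsub>B\<^esub> inv\<^bsub>B\<^esub> (f x))"

definition deltas :: "('a,'c) monoid_scheme \<Rightarrow> ('b,'d) monoid_scheme \<Rightarrow> 'a list \<Rightarrow> ('a \<Rightarrow> 'b) \<Rightarrow> ('a \<Rightarrow> 'b)"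
  where "deltas A B as f = foldr (delta A B) as f"

definition is_zero_map :: "('a,'c) monoid_scheme \<Rightarrow> ('b,'d) monoid_scheme \<Rightarrow> ('a \<Rightarrow> 'b) \<Rightarrow> bool"
  where "is_zero_map A B f \<longleftrightarrow> (\<forall>x\<in>carrier A. f x = \<one>\<^bsub>B\<^esub>)"

definition fdeg :: "('a,'c) monoid_scheme \<Rightarrow> ('b,'d) monoid_scheme \<Rightarrow> ('a \<Rightarrow> 'b) \<Rightarrow> ereal"
  where "fdeg A B f =
    (if is_zero_map A B f then -\<infinity>
     else if (\<exists>n::nat. \<forall>as. set as \<subseteq> carrier A \<and> length as = Suc n \<longrightarrow> is_zero_map A B (deltas A B as f))
     then ereal (real (LEAST n::nat. \<forall>as. set as \<subseteq> carrier A \<and> length as = Suc n \<longrightarrow> is_zero_map A B (deltas A B as f)))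
     else \<infinity>)"

definition sum_inj :: "'i set \<Rightarrow> ('i \<Rightarrow> ('a,'c) monoid_scheme) \<Rightarrow> 'i \<Rightarrow> 'a \<Rightarrow> ('i \<Rightarrow> 'a)"
  where "sum_inj I G k a = (\<lambda>i\<in>I. if i = k then a else \<one>\<^bsub>G i\<^esub>)"

end

theory Submission
  imports Defs
begin


lemma delta_closed:
  assumes "group A" "group B" "h \<in> carrier A \<rightarrow> carrier B" "a \<in> carrier A"
  shows "delta A B a h \<in> carrier A \<rightarrow> carrier B"
  using assms by (auto simp: delta_def Pi_def group.is_monoid monoid.m_closed group.inv_closed)

lemma deltas_closed:
  assumes "group A" "group B" "h \<in> carrier A \<rightarrow> carrier B" "set as \<subseteq> carrier A"
  shows "deltas A B as h \<in> carrier A \<rightarrow> carrier B"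
  using assms(4) by (induction as) (auto simp: deltas_def assms delta_closed)

lemma delta_zero:
  assumes "group A" "group B" "is_zero_map A B h" "a \<in> carrier A"
  shows "is_zero_map A B (delta A B a h)"
  using assms by (auto simp: delta_def is_zero_map_def group.is_monoid monoid.m_closed monoid.inv_one)

lemma deltas_zero:
  assumes "group A" "group B" "is_zero_map A B h" "set as \<subseteq> carrier A"
  shows "is_zero_map A B (deltas A B as h)"
  using assms(4) by (induction as) (auto simp: deltas_def assms delta_zero)

lemma deltas_append: "deltas A B (xs @ ys) h = deltas A B xs (deltas A B ys h)"
  by (simp add: deltas_def)

lemma deltas_Cons: "deltas A B (x # ys) h = delta A B x (deltas A B ys h)"
  by (simp add: deltas_def)

lemma delta_comm:
  assumes "comm_group A" "comm_group B" "h \<in> carrier A \<rightarrow> carrier B"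
    "a \<in> carrier A" "b \<in> carrier A" "x \<in> carrier A"
  shows "delta A B a (delta A B b h) x = delta A B b (delta A B a h) x"
proof -
  interpret A: comm_group A by fact
  interpret B: comm_group B by fact
  have e: "x \<otimes>\<^bsub>A\<^esub> a \<otimes>\<^bsub>A\<^esub> b = x \<otimes>\<^bsub>A\<^esub> b \<otimes>\<^bsub>A\<^esub> a"
    using assms by (metis A.m_assoc A.m_comm)
  have c: "h (x \<otimes>\<^bsub>A\<^esub> b \<otimes>\<^bsub>A\<^esub> a) \<in> carrier B" "h (x \<otimes>\<^bsub>A\<^esub> a) \<in> carrier B"
     "h (x \<otimes>\<^bsub>A\<^esub> b) \<in> carrier B" "h x \<in> carrier B"
    using assms by auto
  show ?thesis unfolding delta_def e
    using c by (simp add: B.inv_mult_group B.m_ac)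
qed

lemma delta_cong:
  assumes "group A" "\<forall>x\<in>carrier A. h1 x = h2 x" "a \<in> carrier A" "x \<in> carrier A"
  shows "delta A B a h1 x = delta A B a h2 x"
  using assms by (simp add: delta_def group.is_monoid monoid.m_closed)

lemma deltas_move:
  assumes "comm_group A" "comm_group B" "h \<in> carrier A \<rightarrow> carrier B"
    "set (g # as @ gs) \<subseteq> carrier A" "x \<in> carrier A"
  shows "deltas A B (g # as @ gs) h x = deltas A B (as @ g # gs) h x"
  using assms(4,5)
proof (induction as arbitrary: x)
  case Nil then show ?case by simp
next
  case (Cons a as)
  have gA: "group A" "group B" using assms comm_group.axioms(2) by blast+
  have R: "deltas A B (as @ gs) h \<in> carrier A \<rightarrow> carrier B"
    using Cons.prems by (intro deltas_closed gA assms) auto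
  have "deltas A B (g # (a # as) @ gs) h x
     = delta A B g (delta A B a (deltas A B (as @ gs) h)) x" by (simp add: deltas_Cons)
  also have "\<dots> = delta A B a (delta A B g (deltas A B (as @ gs) h)) x"
    using Cons.prems by (intro delta_comm assms R) auto
  also have "\<dots> = delta A B a (deltas A B (as @ g # gs) h) x"
    using Cons.prems Cons.IH
    by (intro delta_cong gA) (auto simp: deltas_Cons)
  finally show ?case by (simp add: deltas_Cons)
qed



locale setting =
  fixes \<Gamma> :: "'i set" and G :: "'i \<Rightarrow> ('a,'c) monoid_scheme" and S :: "'i \<Rightarrow> 'a set"
    and B :: "('b,'d) monoid_scheme"
  assumes grp: "\<And>\<gamma>. \<gamma> \<in> \<Gamma> \<Longrightarrow> comm_group (G \<gamma>)"
    and Ssub: "\<And>\<gamma>. \<gamma> \<in> \<Gamma> \<Longrightarrow> S \<gamma> \<subseteq> carrier (G \<gamma>)"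
    and gen: "\<And>\<gamma>. \<gamma> \<in> \<Gamma> \<Longrightarrow> generate (G \<gamma>) (S \<gamma>) = carrier (G \<gamma>)"
    and cB: "comm_group B"
begin

declare mult_sum_group[simp del] one_sum_group[simp del]

abbreviation "A \<equiv> sum_group \<Gamma> G"

lemma grp': "\<And>\<gamma>. \<gamma> \<in> \<Gamma> \<Longrightarrow> group (G \<gamma>)"
  using grp comm_group.axioms(2) by blast

lemma gA: "group A" by (simp add: grp')

lemma cA: "comm_group A"
proof (rule group.group_comm_groupI[OF gA])
  fix x y assume "x \<in> carrier A" "y \<in> carrier A"
  then show "x \<otimes>\<^bsub>A\<^esub> y = y \<otimes>\<^bsub>A\<^esub> x"
  proof -
    have "\<And>i. i \<in> \<Gamma> \<Longrightarrow> x i \<otimes>\<^bsub>G i\<^esub> y i = y i \<otimes>\<^bsub>G i\<^esub> x i"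
      using \<open>x \<in> carrier A\<close> \<open>y \<in> carrier A\<close>
      by (auto simp: carrier_sum_group grp' PiE_iff intro: comm_monoid.m_comm[OF comm_group.axioms(1)[OF grp]])
    then show ?thesis by (simp add: mult_sum_group cong: restrict_cong)
  qed
qed

lemma one_cl: "i \<in> \<Gamma> \<Longrightarrow> \<one>\<^bsub>G i\<^esub> \<in> carrier (G i)"
  by (simp add: grp' group.is_monoid monoid.one_closed)

lemma gB: "group B" using cB comm_group.axioms(2) by blast

lemma sum_inj_carrier:
  assumes "\<gamma> \<in> \<Gamma>" "s \<in> carrier (G \<gamma>)"
  shows "sum_inj \<Gamma> G \<gamma> s \<in> carrier A"
proof -
  have "{i \<in> \<Gamma>. sum_inj \<Gamma> G \<gamma> s i \<noteq> \<one>\<^bsub>G i\<^esub>} \<subseteq> {\<gamma>}" by (auto simp: sum_inj_def)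
  then show ?thesis using assms
    by (auto simp: carrier_sum_group grp' sum_inj_def PiE_iff one_cl intro: finite_subset)
qed

lemma sum_inj_one: "\<gamma> \<in> \<Gamma> \<Longrightarrow> sum_inj \<Gamma> G \<gamma> \<one>\<^bsub>G \<gamma>\<^esub> = \<one>\<^bsub>A\<^esub>"
  by (auto simp: sum_inj_def one_sum_group)

lemma sum_inj_mult:
  assumes "\<gamma> \<in> \<Gamma>" "a \<in> carrier (G \<gamma>)" "b \<in> carrier (G \<gamma>)"
  shows "sum_inj \<Gamma> G \<gamma> (a \<otimes>\<^bsub>G \<gamma>\<^esub> b) = sum_inj \<Gamma> G \<gamma> a \<otimes>\<^bsub>A\<^esub> sum_inj \<Gamma> G \<gamma> b"
  using assms by (auto simp: sum_inj_def grp' mult_sum_group group.is_monoid monoid.l_one intro!: restrict_ext)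

lemma zero_delta_iff:
  assumes "h \<in> carrier A \<rightarrow> carrier B" "g \<in> carrier A"
  shows "is_zero_map A B (delta A B g h) \<longleftrightarrow> (\<forall>x\<in>carrier A. h (x \<otimes>\<^bsub>A\<^esub> g) = h x)"
proof -
  interpret B: group B by (rule gB)
  interpret A: group A by (rule gA)
  show ?thesis unfolding is_zero_map_def delta_def
  proof (intro iffI ballI)
    fix x assume *: "\<forall>x\<in>carrier A. h (x \<otimes>\<^bsub>A\<^esub> g) \<otimes>\<^bsub>B\<^esub> inv\<^bsub>B\<^esub> h x = \<one>\<^bsub>B\<^esub>"
      and x: "x \<in> carrier A"
    have c: "h (x \<otimes>\<^bsub>A\<^esub> g) \<in> carrier B" "h x \<in> carrier B" using assms x by auto
    have "h (x \<otimes>\<^bsub>A\<^esub> g) \<otimes>\<^bsub>B\<^esub> inv\<^bsub>B\<^esub> h x = \<one>\<^bsub>B\<^esub>" using * x by blast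
    then have "inv\<^bsub>B\<^esub> (inv\<^bsub>B\<^esub> h x) = h (x \<otimes>\<^bsub>A\<^esub> g)"
      using c by (intro B.inv_equality) auto
    then show "h (x \<otimes>\<^bsub>A\<^esub> g) = h x" using c by simp
  next
    fix x assume *: "\<forall>x\<in>carrier A. h (x \<otimes>\<^bsub>A\<^esub> g) = h x" and x: "x \<in> carrier A"
    have c: "h x \<in> carrier B" using assms x by auto
    show "h (x \<otimes>\<^bsub>A\<^esub> g) \<otimes>\<^bsub>B\<^esub> inv\<^bsub>B\<^esub> h x = \<one>\<^bsub>B\<^esub>" using * x c by (simp add: B.r_inv)
  qed
qed

lemma invariance:
  assumes h: "h \<in> carrier A \<rightarrow> carrier B"
    and z: "\<And>\<gamma> s. \<gamma> \<in> \<Gamma> \<Longrightarrow> s \<in> S \<gamma> \<Longrightarrow> is_zero_map A B (delta A B (sum_inj \<Gamma> G \<gamma> s) h)"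
    and a: "a \<in> carrier A"
  shows "is_zero_map A B (delta A B a h)"
proof -
  interpret A: group A by (rule gA)
  have inv1: "\<forall>x\<in>carrier A. h (x \<otimes>\<^bsub>A\<^esub> sum_inj \<Gamma> G \<gamma> s) = h x"
    if "\<gamma> \<in> \<Gamma>" "s \<in> carrier (G \<gamma>)" for \<gamma> s
  proof -
    interpret Gg: group "G \<gamma>" using grp' that(1) .
    have "s \<in> generate (G \<gamma>) (S \<gamma>)" using gen that by auto
    then show ?thesis
    proof (induction rule: generate.induct)
      case one then show ?case using that
        by (simp add: sum_inj_one A.r_one del: one_sum_group mult_sum_group)
    next
      case (incl g)
      then show ?case using z[OF that(1) incl] zero_delta_iff[OF h] sum_inj_carrier Ssub that by blast
    next
      case (inv g)
      have gc: "g \<in> carrier (G \<gamma>)" using inv Ssub that by auto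
      have zz: "\<forall>x\<in>carrier A. h (x \<otimes>\<^bsub>A\<^esub> sum_inj \<Gamma> G \<gamma> g) = h x"
        using z[OF that(1) inv] zero_delta_iff[OF h] sum_inj_carrier gc that by blast
      show ?case
      proof
        fix x assume x: "x \<in> carrier A"
        have ic: "sum_inj \<Gamma> G \<gamma> (inv\<^bsub>G \<gamma>\<^esub> g) \<in> carrier A" using sum_inj_carrier that gc by auto
        have "x \<otimes>\<^bsub>A\<^esub> sum_inj \<Gamma> G \<gamma> (inv\<^bsub>G \<gamma>\<^esub> g) \<otimes>\<^bsub>A\<^esub> sum_inj \<Gamma> G \<gamma> g = x"
          using x ic gc that sum_inj_carrier
          by (simp add: A.m_assoc Gg.l_inv flip: sum_inj_mult) (simp add: sum_inj_one)
        then show "h (x \<otimes>\<^bsub>A\<^esub> sum_inj \<Gamma> G \<gamma> (inv\<^bsub>G \<gamma>\<^esub> g)) = h x"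
          using zz x ic by (metis A.m_closed)
      qed
    next
      case (eng g1 g2)
      have c: "g1 \<in> carrier (G \<gamma>)" "g2 \<in> carrier (G \<gamma>)" using eng.hyps gen that by auto
      show ?case
      proof
        fix x assume x: "x \<in> carrier A"
        have "h (x \<otimes>\<^bsub>A\<^esub> sum_inj \<Gamma> G \<gamma> (g1 \<otimes>\<^bsub>G \<gamma>\<^esub> g2))
            = h ((x \<otimes>\<^bsub>A\<^esub> sum_inj \<Gamma> G \<gamma> g1) \<otimes>\<^bsub>A\<^esub> sum_inj \<Gamma> G \<gamma> g2)"
          using c that x sum_inj_carrier by (simp add: sum_inj_mult A.m_assoc)
        also have "\<dots> = h x" using eng.IH x c that sum_inj_carrier by (metis A.m_closed)
        finally show "h (x \<otimes>\<^bsub>A\<^esub> sum_inj \<Gamma> G \<gamma> (g1 \<otimes>\<^bsub>G \<gamma>\<^esub> g2)) = h x" .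
      qed
    qed
  qed
  have main: "\<forall>y\<in>carrier A. {i \<in> \<Gamma>. y i \<noteq> \<one>\<^bsub>G i\<^esub>} \<subseteq> F \<longrightarrow> (\<forall>x\<in>carrier A. h (x \<otimes>\<^bsub>A\<^esub> y) = h x)"
    if "finite F" for F
    using that
  proof (induction F rule: finite_induct)
    case empty
    show ?case
    proof (intro ballI impI)
      fix y x assume y: "y \<in> carrier A" "{i \<in> \<Gamma>. y i \<noteq> \<one>\<^bsub>G i\<^esub>} \<subseteq> {}" and x: "x \<in> carrier A"
      have "y = \<one>\<^bsub>A\<^esub>" using y by (auto simp: carrier_sum_group grp' PiE_iff extensional_def one_sum_group)
      then show "h (x \<otimes>\<^bsub>A\<^esub> y) = h x" using x by simp
    qed
  next
    case (insert \<gamma> F)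
    show ?case
    proof (intro ballI impI)
      fix y x assume y: "y \<in> carrier A" "{i \<in> \<Gamma>. y i \<noteq> \<one>\<^bsub>G i\<^esub>} \<subseteq> insert \<gamma> F" and x: "x \<in> carrier A"
      show "h (x \<otimes>\<^bsub>A\<^esub> y) = h x"
      proof (cases "\<gamma> \<in> \<Gamma>")
        case False
        then show ?thesis using insert.IH y x by blast
      next
        case True
        define y' where "y' = y(\<gamma> := \<one>\<^bsub>G \<gamma>\<^esub>)"
        have yc: "y \<in> (\<Pi>\<^sub>E i\<in>\<Gamma>. carrier (G i))" "finite {i \<in> \<Gamma>. y i \<noteq> \<one>\<^bsub>G i\<^esub>}"
          using y by (auto simp: carrier_sum_group grp')
        have "{i \<in> \<Gamma>. y' i \<noteq> \<one>\<^bsub>G i\<^esub>} \<subseteq> {i \<in> \<Gamma>. y i \<noteq> \<one>\<^bsub>G i\<^esub>}" by (auto simp: y'_def)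
        then have fin: "finite {i \<in> \<Gamma>. y' i \<noteq> \<one>\<^bsub>G i\<^esub>}" using yc(2) by (rule finite_subset)
        have "y' \<in> (\<Pi>\<^sub>E i\<in>\<Gamma>. carrier (G i))"
          using yc True by (auto simp: y'_def PiE_iff extensional_def one_cl)
        then have y'c: "y' \<in> carrier A" using fin by (simp add: carrier_sum_group grp')
        have y'F: "{i \<in> \<Gamma>. y' i \<noteq> \<one>\<^bsub>G i\<^esub>} \<subseteq> F" using y(2) by (auto simp: y'_def)
        have ygc: "y \<gamma> \<in> carrier (G \<gamma>)" using yc True by auto
        have dec: "y = y' \<otimes>\<^bsub>A\<^esub> sum_inj \<Gamma> G \<gamma> (y \<gamma>)"
        proof
          fix i show "y i = (y' \<otimes>\<^bsub>A\<^esub> sum_inj \<Gamma> G \<gamma> (y \<gamma>)) i"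
            using yc True ygc
            by (cases "i \<in> \<Gamma>") (auto simp: y'_def sum_inj_def mult_sum_group PiE_iff extensional_def grp'
                 group.is_monoid monoid.l_one monoid.r_one)
        qed
        have "h (x \<otimes>\<^bsub>A\<^esub> y) = h ((x \<otimes>\<^bsub>A\<^esub> y') \<otimes>\<^bsub>A\<^esub> sum_inj \<Gamma> G \<gamma> (y \<gamma>))"
          using x y'c ygc True sum_inj_carrier by (subst dec) (simp add: A.m_assoc)
        also have "\<dots> = h (x \<otimes>\<^bsub>A\<^esub> y')" using inv1[OF True ygc] x y'c by blast
        also have "\<dots> = h x" using insert.IH y'c y'F x by blast
        finally show ?thesis .
      qed
    qed
  qed
  have "finite {i \<in> \<Gamma>. a i \<noteq> \<one>\<^bsub>G i\<^esub>}" using a by (auto simp: carrier_sum_group grp')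
  then have "\<forall>x\<in>carrier A. h (x \<otimes>\<^bsub>A\<^esub> a) = h x" using main a by blast
  then show ?thesis using zero_delta_iff[OF h a] by blast
qed


definition "T = {sum_inj \<Gamma> G \<gamma> s | \<gamma> s. \<gamma> \<in> \<Gamma> \<and> s \<in> S \<gamma>}"

lemma T_carrier: "T \<subseteq> carrier A"
  using Ssub sum_inj_carrier by (auto simp: T_def)

lemma replace:
  assumes f: "f \<in> carrier A \<rightarrow> carrier B"
  shows "set as \<subseteq> carrier A \<Longrightarrow> set gs \<subseteq> T \<Longrightarrow> \<not> is_zero_map A B (deltas A B (as @ gs) f)
    \<Longrightarrow> \<exists>gs'. set gs' \<subseteq> T \<and> length gs' = length as + length gs \<and> \<not> is_zero_map A B (deltas A B gs' f)"
proof (induction as arbitrary: gs)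
  case Nil then show ?case by auto
next
  case (Cons a as)
  let ?R = "deltas A B (as @ gs) f"
  have R: "?R \<in> carrier A \<rightarrow> carrier B"
    using Cons.prems T_carrier by (intro deltas_closed gA gB f) auto
  have aC: "a \<in> carrier A" using Cons.prems by simp
  have "\<not> is_zero_map A B (delta A B a ?R)" using Cons.prems by (simp add: deltas_Cons)
  then obtain \<gamma> s where gs: "\<gamma> \<in> \<Gamma>" "s \<in> S \<gamma>"
    and nz: "\<not> is_zero_map A B (delta A B (sum_inj \<Gamma> G \<gamma> s) ?R)"
    using invariance[OF R _ aC] by blast
  define g where "g = sum_inj \<Gamma> G \<gamma> s"
  have gT: "g \<in> T" using gs by (auto simp: T_def g_def)
  have nz2: "\<not> is_zero_map A B (deltas A B (g # as @ gs) f)"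
    using nz by (simp add: deltas_Cons g_def)
  have "\<forall>x\<in>carrier A. deltas A B (g # as @ gs) f x = deltas A B (as @ g # gs) f x"
    using Cons.prems gT T_carrier by (intro ballI deltas_move cA cB f) auto
  then have "\<not> is_zero_map A B (deltas A B (as @ g # gs) f)"
    using nz2 by (simp add: is_zero_map_def)
  then obtain gs' where "set gs' \<subseteq> T" "length gs' = length as + length (g # gs)"
    "\<not> is_zero_map A B (deltas A B gs' f)"
    using Cons.IH[of "g # gs"] Cons.prems gT by auto
  then show ?case by auto
qed

end

lemma fdeg_ge:
  assumes "group A" "group B" "set L \<subseteq> carrier A" "\<not> is_zero_map A B (deltas A B L f)"
  shows "fdeg A B f \<ge> ereal (real (length L))"
proof -
  have nz: "\<not> is_zero_map A B f" using deltas_zero assms by blast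
  let ?P = "\<lambda>n::nat. \<forall>as. set as \<subseteq> carrier A \<and> length as = Suc n \<longrightarrow> is_zero_map A B (deltas A B as f)"
  show ?thesis
  proof (cases "\<exists>n. ?P n")
    case True
    define m where "m = (LEAST n. ?P n)"
    have Pm: "?P m" unfolding m_def using True by (rule LeastI_ex)
    have "length L \<le> m"
    proof (rule ccontr)
      assume "\<not> length L \<le> m"
      define k where "k = length L - Suc m"
      have L: "L = take k L @ drop k L" by simp
      have "set (drop k L) \<subseteq> carrier A" "length (drop k L) = Suc m"
        using assms(3) \<open>\<not> length L \<le> m\<close> set_drop_subset[of k L] by (auto simp: k_def)
      then have z: "is_zero_map A B (deltas A B (drop k L) f)" using Pm by blast
      have "is_zero_map A B (deltas A B (take k L) (deltas A B (drop k L) f))"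
        using deltas_zero[OF assms(1,2) z, of "take k L"] assms(3) set_take_subset[of k L] by blast
      then show False using assms(4) L by (metis deltas_append)
    qed
    have "fdeg A B f = ereal (real m)"
      by (subst fdeg_def) (simp only: if_not_P[OF nz] if_P[OF True] m_def)
    then show ?thesis using \<open>length L \<le> m\<close> by simp
  next
    case False
    then show ?thesis by (subst fdeg_def) (simp only: if_not_P[OF nz] if_not_P[OF False] if_False ereal_less_eq(1))
  qed
qed

lemma fdeg_le:
  assumes "fdeg A B f \<ge> ereal (real d)"
  shows "\<exists>L. set L \<subseteq> carrier A \<and> length L = d \<and> \<not> is_zero_map A B (deltas A B L f)"
proof -
  let ?P = "\<lambda>n::nat. \<forall>as. set as \<subseteq> carrier A \<and> length as = Suc n \<longrightarrow> is_zero_map A B (deltas A B as f)"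
  have nz: "\<not> is_zero_map A B f" using assms by (auto simp: fdeg_def)
  show ?thesis
  proof (cases d)
    case 0 then show ?thesis using nz by (intro exI[of _ "[]"]) (simp add: deltas_def)
  next
    case (Suc k)
    show ?thesis
    proof (rule ccontr)
      assume "\<not> ?thesis"
      then have Pk: "?P k" using Suc by blast
      then have "(LEAST n. ?P n) \<le> k" by (rule Least_le)
      then have "fdeg A B f \<le> ereal (real k)" using nz Pk by (auto simp: fdeg_def)
      then show False using assms Suc order_trans[of "ereal (real (Suc k))" "fdeg A B f" "ereal (real k)"] by simp
    qed
  qed
qed

theorem lemma3:
  fixes \<Gamma> :: "'i set"
    and G :: "'i \<Rightarrow> ('a,'c) monoid_scheme"
    and S :: "'i \<Rightarrow> 'a set"
    and B :: "('b,'d) monoid_scheme"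
    and f :: "('i \<Rightarrow> 'a) \<Rightarrow> 'b"
    and d :: nat
  assumes "\<Gamma> \<noteq> {}"
    and "\<And>\<gamma>. \<gamma> \<in> \<Gamma> \<Longrightarrow> comm_group (G \<gamma>)"
    and "\<And>\<gamma>. \<gamma> \<in> \<Gamma> \<Longrightarrow> carrier (G \<gamma>) \<noteq> {\<one>\<^bsub>G \<gamma>\<^esub>}"
    and "\<And>\<gamma>. \<gamma> \<in> \<Gamma> \<Longrightarrow> S \<gamma> \<subseteq> carrier (G \<gamma>)"
    and "\<And>\<gamma>. \<gamma> \<in> \<Gamma> \<Longrightarrow> generate (G \<gamma>) (S \<gamma>) = carrier (G \<gamma>)"
    and "comm_group B"
    and "f \<in> carrier (sum_group \<Gamma> G) \<rightarrow> carrier B"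
  shows "(\<exists>(r::nat) (\<gamma>s::nat \<Rightarrow> 'i) (ds::nat \<Rightarrow> nat) (a::nat \<Rightarrow> nat \<Rightarrow> 'a).
            (\<forall>i<r. \<gamma>s i \<in> \<Gamma> \<and> ds i > 0 \<and> (\<forall>j<ds i. a i j \<in> S (\<gamma>s i)))
          \<and> (\<Sum>i<r. ds i) = d
          \<and> \<not> is_zero_map (sum_group \<Gamma> G) B
                (deltas (sum_group \<Gamma> G) B
                   (concat (map (\<lambda>i. map (\<lambda>j. sum_inj \<Gamma> G (\<gamma>s i) (a i j)) [0..<ds i]) [0..<r])) f))
     \<longleftrightarrow> fdeg (sum_group \<Gamma> G) B f \<ge> ereal (real d)"
proof -
  interpret setting \<Gamma> G S B by (rule setting.intro) (use assms in auto)
  show ?thesis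
  proof
    assume "\<exists>(r::nat) (\<gamma>s::nat \<Rightarrow> 'i) (ds::nat \<Rightarrow> nat) (a::nat \<Rightarrow> nat \<Rightarrow> 'a).
            (\<forall>i<r. \<gamma>s i \<in> \<Gamma> \<and> ds i > 0 \<and> (\<forall>j<ds i. a i j \<in> S (\<gamma>s i)))
          \<and> (\<Sum>i<r. ds i) = d
          \<and> \<not> is_zero_map (sum_group \<Gamma> G) B
                (deltas (sum_group \<Gamma> G) B
                   (concat (map (\<lambda>i. map (\<lambda>j. sum_inj \<Gamma> G (\<gamma>s i) (a i j)) [0..<ds i]) [0..<r])) f)"
    then obtain r \<gamma>s ds a where H: "\<forall>i<r. \<gamma>s i \<in> \<Gamma> \<and> ds i > 0 \<and> (\<forall>j<ds i. a i j \<in> S (\<gamma>s i))"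
      "(\<Sum>i<r. ds i) = d"
      "\<not> is_zero_map (sum_group \<Gamma> G) B
                (deltas (sum_group \<Gamma> G) B
                   (concat (map (\<lambda>i. map (\<lambda>j. sum_inj \<Gamma> G (\<gamma>s i) (a i j)) [0..<ds i]) [0..<r])) f)"
      by blast
    let ?L = "concat (map (\<lambda>i. map (\<lambda>j. sum_inj \<Gamma> G (\<gamma>s i) (a i j)) [0..<ds i]) [0..<r])"
    have len: "length ?L = d"
      using H(2) by (simp add: length_concat comp_def sum_list_distinct_conv_sum_set lessThan_atLeast0)
    have "set ?L \<subseteq> carrier (sum_group \<Gamma> G)"
      using H(1) Ssub by (auto intro!: sum_inj_carrier) (meson subsetD)
    from fdeg_ge[OF gA gB this H(3)] len show "fdeg (sum_group \<Gamma> G) B f \<ge> ereal (real d)" by simp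
  next
    assume "fdeg (sum_group \<Gamma> G) B f \<ge> ereal (real d)"
    from fdeg_le[OF this] obtain L where L: "set L \<subseteq> carrier (sum_group \<Gamma> G)" "length L = d"
      "\<not> is_zero_map (sum_group \<Gamma> G) B (deltas (sum_group \<Gamma> G) B L f)" by blast
    from replace[OF assms(7), of L "[]"] L obtain gs where gs: "set gs \<subseteq> T" "length gs = d"
      "\<not> is_zero_map (sum_group \<Gamma> G) B (deltas (sum_group \<Gamma> G) B gs f)" by auto
    have "\<forall>i<d. \<exists>\<gamma> s. \<gamma> \<in> \<Gamma> \<and> s \<in> S \<gamma> \<and> gs ! i = sum_inj \<Gamma> G \<gamma> s"
    proof (intro allI impI)
      fix i assume "i < d"
      then have "gs ! i \<in> T" using gs(1,2) nth_mem by (metis subsetD)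
      then show "\<exists>\<gamma> s. \<gamma> \<in> \<Gamma> \<and> s \<in> S \<gamma> \<and> gs ! i = sum_inj \<Gamma> G \<gamma> s" by (auto simp: T_def)
    qed
    then obtain \<gamma>s a0 where ch: "\<forall>i<d. \<gamma>s i \<in> \<Gamma> \<and> a0 i \<in> S (\<gamma>s i) \<and> gs ! i = sum_inj \<Gamma> G (\<gamma>s i) (a0 i)"
      by metis
    have eq: "concat (map (\<lambda>i. map (\<lambda>j. sum_inj \<Gamma> G (\<gamma>s i) (a0 i)) [0..<1]) [0..<d]) = gs"
      using ch gs(2) by (intro nth_equalityI) (auto simp: concat_map_singleton)
    show "\<exists>(r::nat) (\<gamma>s::nat \<Rightarrow> 'i) (ds::nat \<Rightarrow> nat) (a::nat \<Rightarrow> nat \<Rightarrow> 'a).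
            (\<forall>i<r. \<gamma>s i \<in> \<Gamma> \<and> ds i > 0 \<and> (\<forall>j<ds i. a i j \<in> S (\<gamma>s i)))
          \<and> (\<Sum>i<r. ds i) = d
          \<and> \<not> is_zero_map (sum_group \<Gamma> G) B
                (deltas (sum_group \<Gamma> G) B
                   (concat (map (\<lambda>i. map (\<lambda>j. sum_inj \<Gamma> G (\<gamma>s i) (a i j)) [0..<ds i]) [0..<r])) f)"
      apply (rule exI[of _ d], rule exI[of _ \<gamma>s], rule exI[of _ "\<lambda>_. 1"], rule exI[of _ "\<lambda>i j. a0 i"])
      using ch eq gs(3) by auto
  qed
qed

end
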